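(* For every $d\geq 2$, $m(\ell_\infty^d)=2d-1$, where $\ell_\infty^d$ is $\mathbb{R}^d$ with the norm $\|x\|_\infty=\max_i |x^{(i)}|$.
   Context: For a set $S$ in a normed space, its midpoint set is $M(S)=\{\tfrac12(x+y): x,y\in S,\ x\neq y\}$. A set $S$ is an M-set if every vector in $M(S)$ has norm exactly $1$ and every vector in $S$ has norm strictly greater than $1$. $m(X)$ denotes the largest cardinality of an M-set in the normed space $X$ if such a largest finite cardinality exists, and $m(X)=\infty$ otherwise. *)

theory Defs
  imports "HOL-Analysis.Analysis" "HOL-Library.Extended_Nat"
begin

definition midpoint_set :: "'a::real_vector set \<Rightarrow> 'a set" where
  "midpoint_set S = {(1/2) *\<^sub>R (x + y) | x y. x \<in> S \<and> y \<in> S \<and> x \<noteq> y}"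

definition is_M_set :: "('a::real_vector \<Rightarrow> real) \<Rightarrow> 'a set \<Rightarrow> bool" where
  "is_M_set N S \<longleftrightarrow> (\<forall>v \<in> midpoint_set S. N v = 1) \<and> (\<forall>x \<in> S. N x > 1)"

definition m_number :: "('a::real_vector \<Rightarrow> real) \<Rightarrow> enat" where
  "m_number N = (if \<exists>n::nat. (\<exists>S. is_M_set N S \<and> finite S \<and> card S = n)
                                 \<and> (\<forall>S. is_M_set N S \<longrightarrow> finite S \<and> card S \<le> n)
                 then enat (THE n::nat. (\<exists>S. is_M_set N S \<and> finite S \<and> card S = n)
                                 \<and> (\<forall>S. is_M_set N S \<longrightarrow> finite S \<and> card S \<le> n))
                 else \<infinity>)"

text \<open>The maximum norm on R^d, with R^d represented as real^'n, d = CARD('n).\<close>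
definition sup_norm :: "real^'n \<Rightarrow> real" where
  "sup_norm x = Max (range (\<lambda>i. \<bar>x $ i\<bar>))"

end

theory Submission
  imports Defs
begin

lemma sn_ge: "\<bar>x$i\<bar> \<le> sup_norm x"
  unfolding sup_norm_def by (rule Max_ge) auto

lemma sn_ex: "\<exists>i. sup_norm x = \<bar>x$i\<bar>"
proof -
  have "sup_norm x \<in> range (\<lambda>i. \<bar>x $ i\<bar>)"
    unfolding sup_norm_def by (rule Max_in) auto
  thus ?thesis by auto
qed

lemma sn_one:
  assumes "\<forall>i. \<bar>x$i\<bar> \<le> 1" "\<bar>x$i\<bar> = 1"
  shows "sup_norm x = 1"
  using sn_ex[of x] sn_ge[of x i] assms by (metis order_antisym)

lemma pairM:
  fixes S :: "(real^'n) set"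
  assumes M: "is_M_set sup_norm S" and "x\<in>S" "y\<in>S" "x\<noteq>y"
  shows "(\<forall>i. \<bar>x$i+y$i\<bar> \<le> 2) \<and> (\<exists>i. \<bar>x$i+y$i\<bar> = 2)"
proof -
  have "(1/2) *\<^sub>R (x+y) \<in> midpoint_set S" using assms unfolding midpoint_set_def by blast
  hence h: "sup_norm ((1/2) *\<^sub>R (x+y)) = 1" using M unfolding is_M_set_def by blast
  have A: "\<forall>i. \<bar>x$i+y$i\<bar> \<le> 2"
  proof
    fix i
    have "\<bar>((1/2) *\<^sub>R (x+y))$i\<bar> \<le> 1" using sn_ge[of "(1/2) *\<^sub>R (x+y)" i] h by simp
    thus "\<bar>x$i+y$i\<bar> \<le> 2" by simp
  qed
  obtain i where "sup_norm ((1/2) *\<^sub>R (x+y)) = \<bar>((1/2) *\<^sub>R (x+y))$i\<bar>" using sn_ex by blast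
  hence "\<bar>x$i+y$i\<bar> = 2" using h by simp
  with A show ?thesis by blast
qed

lemma pointM:
  fixes S :: "(real^'n) set"
  assumes M: "is_M_set sup_norm S" and "x\<in>S"
  shows "\<exists>i. \<bar>x$i\<bar> > 1"
  using sn_ex[of x] assms unfolding is_M_set_def by metis

lemma upper:
  fixes S :: "(real^'n) set"
  assumes M: "is_M_set sup_norm S" and d: "CARD('n) \<ge> 2"
  shows "finite S \<and> card S \<le> 2*CARD('n) - 1"
proof -
  define good where "good = (\<lambda>(x::real^'n) (s::'n\<times>bool). if snd s then x$(fst s) > 1 else x$(fst s) < -1)"
  have "\<forall>x\<in>S. \<exists>s. good x s"
  proof
    fix x assume "x\<in>S"
    then obtain i where "\<bar>x$i\<bar> > 1" using pointM[OF M] by blast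
    hence "good x (i, True) \<or> good x (i, False)" unfolding good_def by auto
    thus "\<exists>s. good x s" by blast
  qed
  then obtain f where f: "\<forall>x\<in>S. good x (f x)" by metis
  have inj: "inj_on f S"
  proof (rule inj_onI)
    fix x y assume xy: "x\<in>S" "y\<in>S" "f x = f y"
    show "x = y"
    proof (rule ccontr)
      assume "x\<noteq>y"
      then have b: "\<forall>i. \<bar>x$i+y$i\<bar> \<le> 2" using pairM[OF M] xy by blast
      obtain i b where fx: "f x = (i,b)" by fastforce
      have "good x (i,b)" "good y (i,b)" using f xy fx by auto
      then show False using b[rule_format, of i] unfolding good_def
        by (cases b) (auto simp: abs_le_iff)
    qed
  qed
  have fU: "finite (UNIV :: ('n\<times>bool) set)" by simp
  have fin: "finite S"
    using finite_imageD[OF finite_subset[OF subset_UNIV fU] inj] by blast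
  have cU: "card (UNIV :: ('n\<times>bool) set) = 2*CARD('n)" by (simp add: card_UNIV_bool)
  have cS: "card S = card (f`S)" using card_image[OF inj] by simp
  have cardle: "card S \<le> 2*CARD('n)"
    using cS card_mono[OF fU subset_UNIV, of "f`S"] cU by simp
  have "card S \<noteq> 2*CARD('n)"
  proof
    assume eq: "card S = 2*CARD('n)"
    have surj: "f`S = UNIV"
      using card_subset_eq[OF fU subset_UNIV, of "f`S"] cS cU eq by simp
    have own: "\<And>s. \<exists>w\<in>S. f w = s" using surj by (metis UNIV_I imageE)
    obtain j :: 'n where True by simp
    obtain p where p: "p\<in>S" "f p = (j,True)" using own by blast
    obtain q where q: "q\<in>S" "f q = (j,False)" using own by blast
    have pj: "p$j > 1" using f p unfolding good_def by force
    have qj: "q$j < -1" using f q unfolding good_def by force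
    have pq: "p\<noteq>q" using p q by auto
    have "\<not> S \<subseteq> {p,q}"
    proof
      assume "S \<subseteq> {p,q}"
      hence "card S \<le> card {p,q}" by (intro card_mono) auto
      also have "\<dots> \<le> 2" by (simp add: card_insert_if)
      finally show False using eq d by simp
    qed
    then obtain r where r: "r\<in>S" "r\<noteq>p" "r\<noteq>q" by blast
    obtain k where k: "\<bar>p$k+q$k\<bar> = 2" using pairM[OF M p(1) q(1) pq] by blast
    have bpr: "\<forall>i. \<bar>p$i+r$i\<bar> \<le> 2" using pairM[OF M p(1) r(1)] r by metis
    have bqr: "\<forall>i. \<bar>q$i+r$i\<bar> \<le> 2" using pairM[OF M q(1) r(1)] r by metis
    show False
    proof (cases "k = j")
      case True
      then show False using k pj qj bpr[rule_format, of j] bqr[rule_format, of j]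
        by (auto simp: abs_le_iff abs_eq_iff)
    next
      case False
      obtain o1 where o1: "o1\<in>S" "f o1 = (k,True)" using own by blast
      obtain o2 where o2: "o2\<in>S" "f o2 = (k,False)" using own by blast
      have o1k: "o1$k > 1" using f o1 unfolding good_def by force
      have o2k: "o2$k < -1" using f o2 unfolding good_def by force
      have "o1 \<noteq> p" "o1 \<noteq> q" "o2 \<noteq> p" "o2 \<noteq> q" using o1 o2 p q False by auto
      then have "\<bar>o1$k+p$k\<bar> \<le> 2" "\<bar>o1$k+q$k\<bar> \<le> 2" "\<bar>o2$k+p$k\<bar> \<le> 2" "\<bar>o2$k+q$k\<bar> \<le> 2"
        using pairM[OF M] o1 o2 p q by metis+
      then show False using k o1k o2k by (auto simp: abs_le_iff abs_eq_iff)
    qed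
  qed
  with fin cardle show ?thesis by simp
qed

lemma lower:
  assumes d: "CARD('n::finite) \<ge> 2"
  shows "\<exists>S::(real^'n) set. is_M_set sup_norm S \<and> finite S \<and> card S = 2*CARD('n) - 1"
proof -
  obtain i0 :: 'n where True by simp
  define q :: "real^'n" where "q = (\<chi> i. if i = i0 then -2 else 0)"
  define z :: "'n\<times>bool \<Rightarrow> real^'n" where
    "z = (\<lambda>(j,s). \<chi> i. if i = i0 then 1 else if i = j then (if s then 2 else -2) else 0)"
  define D where "D = (UNIV - {i0}) \<times> (UNIV::bool set)"
  define S where "S = insert q (z ` D)"
  have zc: "z (j,s) $ i = (if i = i0 then 1 else if i = j then (if s then 2 else -2) else 0)" for j s i
    by (simp add: z_def)
  have qc: "q $ i = (if i = i0 then -2 else 0)" for i by (simp add: q_def)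
  have injz: "inj_on z D"
  proof (rule inj_onI)
    fix a b assume ab: "a \<in> D" "b \<in> D" "z a = z b"
    obtain j s where a: "a = (j,s)" by fastforce
    obtain j' s' where b: "b = (j',s')" by fastforce
    have j: "j \<noteq> i0" "j' \<noteq> i0" using ab a b D_def by auto
    have "z a $ j = z b $ j" using ab by simp
    then show "a = b" using a b j zc by (auto split: if_splits)
  qed
  have qnot: "q \<notin> z ` D"
  proof
    assume "q \<in> z ` D"
    then obtain j s where "q = z (j,s)" by auto
    hence "q $ i0 = z (j,s) $ i0" by simp
    thus False using qc zc by simp
  qed
  have cD: "card D = (CARD('n) - 1) * 2"
    by (simp add: D_def card_cartesian_product card_Diff_singleton card_UNIV_bool)
  have fin: "finite S" by (simp add: S_def D_def)
  have cS: "card S = 2*CARD('n) - 1"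
    using qnot injz cD d by (simp add: S_def card_image D_def)
  have key: "(\<forall>i. \<bar>x$i+y$i\<bar> \<le> 2) \<and> (\<exists>i. \<bar>x$i+y$i\<bar> = 2)"
    if xy: "x \<in> S" "y \<in> S" "x \<noteq> y" for x y
  proof -
    have qz: "(\<forall>i. \<bar>q$i+z (j,s)$i\<bar> \<le> 2) \<and> (\<exists>i. \<bar>q$i+z (j,s)$i\<bar> = 2)"
      if "j \<noteq> i0" for j s
      using that by (auto simp: qc zc)
    have zz: "(\<forall>i. \<bar>z (j,s)$i+z (j',s')$i\<bar> \<le> 2) \<and> (\<exists>i. \<bar>z (j,s)$i+z (j',s')$i\<bar> = 2)"
      if "(j,s) \<noteq> (j',s')" for j s j' s'
    proof -
      have "\<bar>z (j,s)$i+z (j',s')$i\<bar> \<le> 2" for i using that by (auto simp: zc)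
      moreover have "\<bar>z (j,s)$i0+z (j',s')$i0\<bar> = 2" by (simp add: zc)
      ultimately show ?thesis by blast
    qed
    show ?thesis
    proof (cases "x = q")
      case True
      then have "y \<in> z ` D" using xy S_def by auto
      then obtain j s where "y = z (j,s)" "j \<noteq> i0" by (auto simp: D_def)
      then show ?thesis using qz True by simp
    next
      case False
      then obtain j s where xj: "x = z (j,s)" "j \<noteq> i0" using xy S_def by (auto simp: D_def)
      show ?thesis
      proof (cases "y = q")
        case True
        then show ?thesis using qz[OF xj(2), of s] xj by (simp add: add.commute)
      next
        case False
        then obtain j' s' where "y = z (j',s')" using xy S_def by (auto simp: D_def)
        then show ?thesis using zz xj xy by metis
      qed
    qed
  qed
  have M: "is_M_set sup_norm S"
    unfolding is_M_set_def
  proof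
    show "\<forall>v\<in>midpoint_set S. sup_norm v = 1"
    proof
      fix v assume "v \<in> midpoint_set S"
      then obtain x y where v: "v = (1/2) *\<^sub>R (x+y)" "x\<in>S" "y\<in>S" "x\<noteq>y"
        unfolding midpoint_set_def by blast
      obtain i where "\<forall>k. \<bar>x$k+y$k\<bar> \<le> 2" "\<bar>x$i+y$i\<bar> = 2" using key[OF v(2-4)] by blast
      then show "sup_norm v = 1" using sn_one[of v i] v(1) by simp
    qed
    show "\<forall>x\<in>S. 1 < sup_norm x"
    proof
      fix x assume "x \<in> S"
      then obtain i where "\<bar>x$i\<bar> = 2"
      proof (cases "x = q")
        case True then show ?thesis using that[of i0] qc by simp
      next
        case False
        then obtain j s where "x = z (j,s)" "j \<noteq> i0" using \<open>x\<in>S\<close> S_def by (auto simp: D_def)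
        then show ?thesis using that[of j] zc by simp
      qed
      then show "1 < sup_norm x" using sn_ge[of x i] by simp
    qed
  qed
  show ?thesis using M fin cS by blast
qed

theorem theorem7:
  assumes "CARD('n::finite) \<ge> 2"
  shows "m_number (sup_norm :: real^'n \<Rightarrow> real) = enat (2 * CARD('n) - 1)"
proof -
  let ?P = "\<lambda>n::nat. (\<exists>S. is_M_set (sup_norm :: real^'n \<Rightarrow> real) S \<and> finite S \<and> card S = n)
                 \<and> (\<forall>S. is_M_set (sup_norm :: real^'n \<Rightarrow> real) S \<longrightarrow> finite S \<and> card S \<le> n)"
  have P: "?P (2 * CARD('n) - 1)" using lower[OF assms] upper[OF _ assms] by blast
  have U: "n = 2 * CARD('n) - 1" if Pn: "?P n" for n
  proof -
    obtain S where S: "is_M_set (sup_norm :: real^'n \<Rightarrow> real) S" "finite S" "card S = n" using Pn by blast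
    obtain T where T: "is_M_set (sup_norm :: real^'n \<Rightarrow> real) T" "finite T" "card T = 2 * CARD('n) - 1"
      using lower[OF assms] by blast
    have "n \<le> 2 * CARD('n) - 1" using upper[OF S(1) assms] S by simp
    moreover have "2 * CARD('n) - 1 \<le> n" using Pn T by metis
    ultimately show ?thesis by simp
  qed
  have "(THE n. ?P n) = 2 * CARD('n) - 1" using P U by (rule the_equality)
  then show ?thesis using P unfolding m_number_def by (smt (verit))
qed

end
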